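(* Let $\Gamma$ be a finite simple non-abelian group with identity $e$, and let $G=\Gamma^\omega$ with the product topology (each factor discrete) and normalized Haar measure. Let $\mathcal U$ be a free ultrafilter on $\omega$. Define $\psi:G\to\Gamma$ by letting $\psi(x)$, for $x=(x_n)\in G$, be the unique $a\in\Gamma$ with $\{n<\omega: x_n=a\}\in\mathcal U$ (so $\psi$ is a surjective homomorphism whose kernel is $G_{\mathcal I}=\{x\in G:\{n:x_n\ne e\}\notin\mathcal U\}$). Let $g\in\Gamma$, $g\neq e$, let $B$ be the subgroup of $\Gamma$ generated by $g$, and let $H=\psi^{-1}[B]$. Then $H$ is a subgroup of $G$ which is not normal and not Haar measurable. *)

theory Defs
  imports "HOL-Probability.Probability" "HOL-Algebra.SimpleGroups" "HOL-Algebra.Product_Groups"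
    "HOL-Algebra.Generated_Groups"
begin

definition free_ultrafilter :: "nat set set \<Rightarrow> bool" where
  "free_ultrafilter U \<longleftrightarrow>
     UNIV \<in> U \<and> {} \<notin> U \<and>
     (\<forall>A B. A \<in> U \<and> A \<subseteq> B \<longrightarrow> B \<in> U) \<and>
     (\<forall>A B. A \<in> U \<and> B \<in> U \<longrightarrow> A \<inter> B \<in> U) \<and>
     (\<forall>A. A \<in> U \<or> - A \<in> U) \<and>
     (\<forall>A. finite A \<longrightarrow> A \<notin> U)"

definition power_group :: "('a, 'c) monoid_scheme \<Rightarrow> (nat \<Rightarrow> 'a) monoid" where
  "power_group \<Gamma> = product_group UNIV (\<lambda>_. \<Gamma>)"

text \<open>Normalized Haar measure on Gamma^omega (product topology, discrete factors):
  the product of the uniform probability measures on the finite factor.\<close>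
definition haar_power :: "('a, 'c) monoid_scheme \<Rightarrow> (nat \<Rightarrow> 'a) measure" where
  "haar_power \<Gamma> = (\<Pi>\<^sub>M n\<in>(UNIV::nat set). uniform_count_measure (carrier \<Gamma>))"

definition haar_measurable :: "('a, 'c) monoid_scheme \<Rightarrow> (nat \<Rightarrow> 'a) set \<Rightarrow> bool" where
  "haar_measurable \<Gamma> S \<longleftrightarrow> S \<in> sets (completion (haar_power \<Gamma>))"

definition ulim :: "('a, 'c) monoid_scheme \<Rightarrow> nat set set \<Rightarrow> (nat \<Rightarrow> 'a) \<Rightarrow> 'a" where
  "ulim \<Gamma> U x = (THE a. a \<in> carrier \<Gamma> \<and> {n. x n = a} \<in> U)"

end

theory Submission
  imports Defs
begin


lemma fu_D:
  assumes "free_ultrafilter U"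
  shows fu_UNIV: "UNIV \<in> U" and fu_empty: "{} \<notin> U"
    and fu_mono0: "\<forall>A B. A \<in> U \<and> A \<subseteq> B \<longrightarrow> B \<in> U"
    and fu_Int0: "\<forall>A B. A \<in> U \<and> B \<in> U \<longrightarrow> A \<inter> B \<in> U"
    and fu_compl0: "\<forall>A. A \<in> U \<or> - A \<in> U"
    and fu_fin0: "\<forall>A. finite A \<longrightarrow> A \<notin> U"
  using assms unfolding free_ultrafilter_def by (auto elim!: conjE simp only:)

lemma fu_mono: "free_ultrafilter U \<Longrightarrow> A \<in> U \<Longrightarrow> A \<subseteq> B \<Longrightarrow> B \<in> U"
  using fu_mono0 by blast

lemma fu_Int: "free_ultrafilter U \<Longrightarrow> A \<in> U \<Longrightarrow> B \<in> U \<Longrightarrow> A \<inter> B \<in> U"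
  using fu_Int0 by blast

lemma fu_compl: "free_ultrafilter U \<Longrightarrow> A \<notin> U \<Longrightarrow> - A \<in> U"
  using fu_compl0 by blast

lemma fu_disj:
  assumes fu: "free_ultrafilter U" and "A \<in> U" "B \<in> U" shows "A \<inter> B \<noteq> {}"
  using fu_Int[OF assms] fu_empty[OF fu] by auto

lemma fu_cofinite: "free_ultrafilter U \<Longrightarrow> finite A \<Longrightarrow> - A \<in> U"
  using fu_fin0 fu_compl by blast

lemma fu_union:
  assumes fu: "free_ultrafilter U" and fin: "finite A"
  shows "(\<Union>a\<in>A. X a) \<in> U \<Longrightarrow> \<exists>a\<in>A. X a \<in> U"
  using fin
proof (induction A rule: finite_induct)
  case empty then show ?case using fu_empty[OF fu] by simp
next
  case (insert a A)
  show ?case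
  proof (cases "X a \<in> U")
    case True then show ?thesis by auto
  next
    case False
    then have "- X a \<in> U" using fu_compl[OF fu] by blast
    then have "(\<Union>a\<in>insert a A. X a) \<inter> - X a \<in> U" using insert.prems fu_Int[OF fu] by blast
    moreover have "(\<Union>a\<in>insert a A. X a) \<inter> - X a \<subseteq> (\<Union>a\<in>A. X a)" by auto
    ultimately have "(\<Union>a\<in>A. X a) \<in> U" using fu_mono[OF fu] by blast
    then show ?thesis using insert.IH by auto
  qed
qed

lemma ulim_ex:
  assumes fu: "free_ultrafilter U" and fin: "finite (carrier \<Gamma>)"
    and x: "\<And>n. x n \<in> carrier \<Gamma>"
  shows "ulim \<Gamma> U x \<in> carrier \<Gamma> \<and> {n. x n = ulim \<Gamma> U x} \<in> U"
proof -
  have "(\<Union>a\<in>carrier \<Gamma>. {n. x n = a}) = UNIV" using x by auto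
  then obtain a where a: "a \<in> carrier \<Gamma>" "{n. x n = a} \<in> U"
    using fu_union[OF fu fin, of "\<lambda>a. {n. x n = a}"] fu_UNIV[OF fu] by auto
  have "\<exists>!a. a \<in> carrier \<Gamma> \<and> {n. x n = a} \<in> U"
  proof (intro ex1I)
    show "a \<in> carrier \<Gamma> \<and> {n. x n = a} \<in> U" using a by auto
    fix b assume "b \<in> carrier \<Gamma> \<and> {n. x n = b} \<in> U"
    then have "{n. x n = a} \<inter> {n. x n = b} \<noteq> {}" using fu_disj[OF fu] a by blast
    then show "b = a" by auto
  qed
  then show ?thesis unfolding ulim_def by (rule theI')
qed

lemma ulim_eq:
  assumes fu: "free_ultrafilter U" and fin: "finite (carrier \<Gamma>)"
    and x: "\<And>n. x n \<in> carrier \<Gamma>" and a: "a \<in> carrier \<Gamma>" "{n. x n = a} \<in> U"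
  shows "ulim \<Gamma> U x = a"
proof -
  have u: "{n. x n = ulim \<Gamma> U x} \<in> U" using ulim_ex[OF fu fin x] by (rule conjunct2)
  have "{n. x n = a} \<inter> {n. x n = ulim \<Gamma> U x} \<noteq> {}"
    by (rule fu_disj[OF fu a(2) u])
  then obtain n where "x n = a" "x n = ulim \<Gamma> U x" by blast
  then show ?thesis by simp
qed

lemma ulim_mult:
  assumes fu: "free_ultrafilter U" and fin: "finite (carrier \<Gamma>)" and gr: "group \<Gamma>"
    and x: "\<And>n. x n \<in> carrier \<Gamma>" and y: "\<And>n. y n \<in> carrier \<Gamma>"
  shows "ulim \<Gamma> U (\<lambda>n. x n \<otimes>\<^bsub>\<Gamma>\<^esub> y n) = ulim \<Gamma> U x \<otimes>\<^bsub>\<Gamma>\<^esub> ulim \<Gamma> U y"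
proof -
  interpret group \<Gamma> by (rule gr)
  have ux: "ulim \<Gamma> U x \<in> carrier \<Gamma>" "{n. x n = ulim \<Gamma> U x} \<in> U" using ulim_ex[OF fu fin x] by auto
  have uy: "ulim \<Gamma> U y \<in> carrier \<Gamma>" "{n. y n = ulim \<Gamma> U y} \<in> U" using ulim_ex[OF fu fin y] by auto
  have i: "{n. x n = ulim \<Gamma> U x} \<inter> {n. y n = ulim \<Gamma> U y} \<in> U"
    by (rule fu_Int[OF fu ux(2) uy(2)])
  have s: "{n. x n = ulim \<Gamma> U x} \<inter> {n. y n = ulim \<Gamma> U y} \<subseteq> {n. x n \<otimes>\<^bsub>\<Gamma>\<^esub> y n = ulim \<Gamma> U x \<otimes>\<^bsub>\<Gamma>\<^esub> ulim \<Gamma> U y}"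
    by auto
  show ?thesis
  proof (rule ulim_eq[OF fu fin])
    show "\<And>n. x n \<otimes>\<^bsub>\<Gamma>\<^esub> y n \<in> carrier \<Gamma>" using x y by simp
    show "ulim \<Gamma> U x \<otimes>\<^bsub>\<Gamma>\<^esub> ulim \<Gamma> U y \<in> carrier \<Gamma>" using ux uy by simp
    show "{n. x n \<otimes>\<^bsub>\<Gamma>\<^esub> y n = ulim \<Gamma> U x \<otimes>\<^bsub>\<Gamma>\<^esub> ulim \<Gamma> U y} \<in> U"
      by (rule fu_mono[OF fu i s])
  qed
qed

lemma ulim_const:
  assumes fu: "free_ultrafilter U" and fin: "finite (carrier \<Gamma>)" and a: "a \<in> carrier \<Gamma>"
  shows "ulim \<Gamma> U (\<lambda>n. a) = a"
proof (rule ulim_eq[OF fu fin _ a])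
  show "{n. a = a} \<in> U" using fu_UNIV[OF fu] by simp
qed (rule a)

lemma ulim_finsupp:
  assumes fu: "free_ultrafilter U" and fin: "finite (carrier \<Gamma>)"
    and x: "\<And>n. x n \<in> carrier \<Gamma>" and xy: "\<And>n. n \<ge> N \<Longrightarrow> x n = y n" and y: "\<And>n. y n \<in> carrier \<Gamma>"
  shows "ulim \<Gamma> U x = ulim \<Gamma> U y"
proof (rule ulim_eq[OF fu fin x])
  have uy: "ulim \<Gamma> U y \<in> carrier \<Gamma>" "{n. y n = ulim \<Gamma> U y} \<in> U" using ulim_ex[OF fu fin y] by auto
  show "ulim \<Gamma> U y \<in> carrier \<Gamma>" by (rule uy(1))
  have i: "{n. y n = ulim \<Gamma> U y} \<inter> - {..<N} \<in> U"
    by (rule fu_Int[OF fu uy(2) fu_cofinite[OF fu]]) simp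
  have s: "{n. y n = ulim \<Gamma> U y} \<inter> - {..<N} \<subseteq> {n. x n = ulim \<Gamma> U y}"
    using xy by auto
  show "{n. x n = ulim \<Gamma> U y} \<in> U" by (rule fu_mono[OF fu i s])
qed




lemma carrier_pg: "carrier (power_group \<Gamma>) = {x. \<forall>n. x n \<in> carrier \<Gamma>}"
  by (auto simp: power_group_def PiE_iff)

lemma mult_pg: "x \<otimes>\<^bsub>power_group \<Gamma>\<^esub> y = (\<lambda>n. x n \<otimes>\<^bsub>\<Gamma>\<^esub> y n)"
  by (simp add: power_group_def restrict_def)

lemma one_pg: "\<one>\<^bsub>power_group \<Gamma>\<^esub> = (\<lambda>n. \<one>\<^bsub>\<Gamma>\<^esub>)"
  by (simp add: power_group_def restrict_def)

lemma group_pg: "group \<Gamma> \<Longrightarrow> group (power_group \<Gamma>)"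
  by (simp add: power_group_def restrict_def)

lemma inv_pg: "group \<Gamma> \<Longrightarrow> x \<in> carrier (power_group \<Gamma>) \<Longrightarrow> inv\<^bsub>power_group \<Gamma>\<^esub> x = (\<lambda>n. inv\<^bsub>\<Gamma>\<^esub> x n)"
  unfolding power_group_def by (subst inv_product_group) (auto simp: power_group_def)

lemma ulim_hom:
  assumes fu: "free_ultrafilter U" and fin: "finite (carrier \<Gamma>)" and gr: "group \<Gamma>"
  shows "group_hom (power_group \<Gamma>) \<Gamma> (ulim \<Gamma> U)"
proof -
  have "ulim \<Gamma> U \<in> hom (power_group \<Gamma>) \<Gamma>"
    by (rule homI) (auto simp: carrier_pg mult_pg ulim_ex[OF fu fin] ulim_mult[OF fu fin gr])
  then show ?thesis using gr group_pg[OF gr] by (simp add: group_hom_def group_hom_axioms_def)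
qed

lemma subgroup_pre:
  assumes fu: "free_ultrafilter U" and fin: "finite (carrier \<Gamma>)" and gr: "group \<Gamma>"
    and B: "subgroup B \<Gamma>"
  shows "subgroup {x \<in> carrier (power_group \<Gamma>). ulim \<Gamma> U x \<in> B} (power_group \<Gamma>)"
proof -
  interpret h: group_hom "power_group \<Gamma>" \<Gamma> "ulim \<Gamma> U" by (rule ulim_hom[OF fu fin gr])
  show ?thesis
  proof (rule h.G.subgroupI)
    show "{x \<in> carrier (power_group \<Gamma>). ulim \<Gamma> U x \<in> B} \<subseteq> carrier (power_group \<Gamma>)" by auto
    show "{x \<in> carrier (power_group \<Gamma>). ulim \<Gamma> U x \<in> B} \<noteq> {}"
      using B h.hom_one by (auto intro!: exI[of _ "\<one>\<^bsub>power_group \<Gamma>\<^esub>"] simp: subgroup.one_closed)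
    fix a b assume a: "a \<in> {x \<in> carrier (power_group \<Gamma>). ulim \<Gamma> U x \<in> B}"
      and b: "b \<in> {x \<in> carrier (power_group \<Gamma>). ulim \<Gamma> U x \<in> B}"
    show "inv\<^bsub>power_group \<Gamma>\<^esub> a \<in> {x \<in> carrier (power_group \<Gamma>). ulim \<Gamma> U x \<in> B}"
      using a B by (auto simp: h.hom_inv subgroup.m_inv_closed)
    show "a \<otimes>\<^bsub>power_group \<Gamma>\<^esub> b \<in> {x \<in> carrier (power_group \<Gamma>). ulim \<Gamma> U x \<in> B}"
      using a b B by (auto simp: subgroup.m_closed)
  qed
qed

lemma cyclic_not_normal:
  assumes sg: "simple_group \<Gamma>" and nc: "\<not> comm_group \<Gamma>"
    and g: "g \<in> carrier \<Gamma>" "g \<noteq> \<one>\<^bsub>\<Gamma>\<^esub>"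
  shows "\<exists>a\<in>carrier \<Gamma>. \<exists>b\<in>generate \<Gamma> {g}. a \<otimes>\<^bsub>\<Gamma>\<^esub> b \<otimes>\<^bsub>\<Gamma>\<^esub> inv\<^bsub>\<Gamma>\<^esub> a \<notin> generate \<Gamma> {g}"
proof (rule ccontr)
  interpret simple_group \<Gamma> by (rule sg)
  assume "\<not> ?thesis"
  then have "generate \<Gamma> {g} \<lhd> \<Gamma>"
    using normal_inv_iff generate_is_subgroup g by auto
  then have "generate \<Gamma> {g} = carrier \<Gamma> \<or> generate \<Gamma> {g} = {\<one>\<^bsub>\<Gamma>\<^esub>}"
    by (rule no_real_normal_subgroup)
  moreover have "g \<in> generate \<Gamma> {g}" by (rule generate.incl) simp
  ultimately have eq: "generate \<Gamma> {g} = carrier \<Gamma>" using g by auto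
  have "comm_group \<Gamma>"
  proof (rule group_comm_groupI)
    fix x y assume "x \<in> carrier \<Gamma>" "y \<in> carrier \<Gamma>"
    then obtain i j :: int where "x = g [^]\<^bsub>\<Gamma>\<^esub> i" "y = g [^]\<^bsub>\<Gamma>\<^esub> j"
    proof -
      have "x \<in> {g [^]\<^bsub>\<Gamma>\<^esub> (k::int) | k. k \<in> UNIV}" "y \<in> {g [^]\<^bsub>\<Gamma>\<^esub> (k::int) | k. k \<in> UNIV}"
        using eq generate_pow[OF g(1)] \<open>x \<in> carrier \<Gamma>\<close> \<open>y \<in> carrier \<Gamma>\<close> by auto
      then show ?thesis using that by blast
    qed
    then show "x \<otimes>\<^bsub>\<Gamma>\<^esub> y = y \<otimes>\<^bsub>\<Gamma>\<^esub> x" using g int_pow_mult[OF g(1), of i j] int_pow_mult[OF g(1), of j i] by (simp add: add.commute)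
  qed
  with nc show False by simp
qed




definition sh :: "('a, 'c) monoid_scheme \<Rightarrow> (nat \<Rightarrow> 'a) \<Rightarrow> (nat \<Rightarrow> 'a) \<Rightarrow> (nat \<Rightarrow> 'a)" where
  "sh \<Gamma> z x = (\<lambda>n. z n \<otimes>\<^bsub>\<Gamma>\<^esub> x n)"

locale hsetup =
  fixes \<Gamma> :: "('a, 'c) monoid_scheme"
  assumes gr: "group \<Gamma>" and fin: "finite (carrier \<Gamma>)"
begin

lemma pps: "product_prob_space (\<lambda>_::nat. uniform_count_measure (carrier \<Gamma>))"
proof -
  have ne: "carrier \<Gamma> \<noteq> {}" using gr group.is_monoid monoid.one_closed by blast
  have "prob_space (uniform_count_measure (carrier \<Gamma>))"
    by (rule prob_space_uniform_count_measure[OF fin ne])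
  then show ?thesis
    by (simp add: product_prob_space_def product_sigma_finite_def prob_space_imp_sigma_finite product_prob_space_axioms_def)
qed

lemma haar_eq: "haar_power \<Gamma> = PiM UNIV (\<lambda>_::nat. uniform_count_measure (carrier \<Gamma>))"
  by (simp add: haar_power_def)

lemma space_haar: "space (haar_power \<Gamma>) = {x. \<forall>n. x n \<in> carrier \<Gamma>}"
  by (auto simp: haar_eq space_PiM PiE_iff space_uniform_count_measure)

lemma prob_haar: "prob_space (haar_power \<Gamma>)"
proof -
  interpret product_prob_space "\<lambda>_::nat. uniform_count_measure (carrier \<Gamma>)" UNIV by (rule pps)
  show ?thesis unfolding haar_eq by (rule P.prob_space_axioms)
qed

lemma sh_closed: "z \<in> space (haar_power \<Gamma>) \<Longrightarrow> x \<in> space (haar_power \<Gamma>) \<Longrightarrow> sh \<Gamma> z x \<in> space (haar_power \<Gamma>)"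
  using gr by (auto simp: space_haar sh_def group.is_monoid monoid.m_closed)

lemma sh_measurable:
  assumes z: "z \<in> space (haar_power \<Gamma>)"
  shows "sh \<Gamma> z \<in> measurable (haar_power \<Gamma>) (haar_power \<Gamma>)"
proof -
  have "(\<lambda>x n. z n \<otimes>\<^bsub>\<Gamma>\<^esub> x n) \<in> measurable (haar_power \<Gamma>) (haar_power \<Gamma>)"
    unfolding haar_eq
  proof (rule measurable_PiM_single')
    fix n :: nat
    have "(\<lambda>a. z n \<otimes>\<^bsub>\<Gamma>\<^esub> a) \<in> measurable (uniform_count_measure (carrier \<Gamma>)) (uniform_count_measure (carrier \<Gamma>))"
      using z gr
      by (auto simp: measurable_def sets_uniform_count_measure space_uniform_count_measure space_haar
          group.is_monoid monoid.m_closed)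
    then show "(\<lambda>x. z n \<otimes>\<^bsub>\<Gamma>\<^esub> x n) \<in> measurable (PiM UNIV (\<lambda>_::nat. uniform_count_measure (carrier \<Gamma>))) (uniform_count_measure (carrier \<Gamma>))"
      by (rule measurable_compose[rotated]) simp
    show "(\<lambda>x n. z n \<otimes>\<^bsub>\<Gamma>\<^esub> x n) \<in> space (PiM UNIV (\<lambda>_::nat. uniform_count_measure (carrier \<Gamma>))) \<rightarrow> (\<Pi>\<^sub>E n\<in>UNIV. space (uniform_count_measure (carrier \<Gamma>)))"
      using sh_closed[OF z] by (auto simp: haar_eq[symmetric] space_haar sh_def space_uniform_count_measure)
  qed
  then show ?thesis by (simp add: sh_def[abs_def])
qed

lemma cyl_eq: "prod_emb UNIV (\<lambda>_::nat. uniform_count_measure (carrier \<Gamma>)) J (Pi\<^sub>E J F) = {x \<in> space (haar_power \<Gamma>). \<forall>j\<in>J. x j \<in> F j}"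
  by (auto simp: prod_emb_def space_haar PiE_iff space_uniform_count_measure)

lemma card_trans:
  assumes a: "a \<in> carrier \<Gamma>" and F: "F \<subseteq> carrier \<Gamma>"
  shows "card {b \<in> carrier \<Gamma>. a \<otimes>\<^bsub>\<Gamma>\<^esub> b \<in> F} = card F"
proof -
  interpret group \<Gamma> by (rule gr)
  have "{b \<in> carrier \<Gamma>. a \<otimes>\<^bsub>\<Gamma>\<^esub> b \<in> F} = (\<lambda>c. inv\<^bsub>\<Gamma>\<^esub> a \<otimes>\<^bsub>\<Gamma>\<^esub> c) ` F"
  proof
    show "{b \<in> carrier \<Gamma>. a \<otimes>\<^bsub>\<Gamma>\<^esub> b \<in> F} \<subseteq> (\<lambda>c. inv\<^bsub>\<Gamma>\<^esub> a \<otimes>\<^bsub>\<Gamma>\<^esub> c) ` F"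
    proof
      fix b assume b: "b \<in> {b \<in> carrier \<Gamma>. a \<otimes>\<^bsub>\<Gamma>\<^esub> b \<in> F}"
      then have "b = inv\<^bsub>\<Gamma>\<^esub> a \<otimes>\<^bsub>\<Gamma>\<^esub> (a \<otimes>\<^bsub>\<Gamma>\<^esub> b)"
        using a by (simp add: m_assoc[symmetric])
      then show "b \<in> (\<lambda>c. inv\<^bsub>\<Gamma>\<^esub> a \<otimes>\<^bsub>\<Gamma>\<^esub> c) ` F"
        using b by blast
    qed
    show "(\<lambda>c. inv\<^bsub>\<Gamma>\<^esub> a \<otimes>\<^bsub>\<Gamma>\<^esub> c) ` F \<subseteq> {b \<in> carrier \<Gamma>. a \<otimes>\<^bsub>\<Gamma>\<^esub> b \<in> F}"
      using a F by (auto simp: m_assoc[symmetric])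
  qed
  moreover have "inj_on (\<lambda>c. inv\<^bsub>\<Gamma>\<^esub> a \<otimes>\<^bsub>\<Gamma>\<^esub> c) F"
    using a F by (intro inj_onI) (metis inv_closed Units_l_cancel Units_eq subsetD)
  ultimately show ?thesis by (simp add: card_image)
qed

lemma sh_preserving:
  assumes z: "z \<in> space (haar_power \<Gamma>)"
  shows "distr (haar_power \<Gamma>) (haar_power \<Gamma>) (sh \<Gamma> z) = haar_power \<Gamma>"
proof -
  interpret product_prob_space "\<lambda>_::nat. uniform_count_measure (carrier \<Gamma>)" UNIV by (rule pps)
  show ?thesis
    unfolding haar_eq
  proof (rule PiM_eq)
    show "sets (distr (PiM UNIV (\<lambda>_. uniform_count_measure (carrier \<Gamma>))) (PiM UNIV (\<lambda>_. uniform_count_measure (carrier \<Gamma>))) (sh \<Gamma> z)) = sets (PiM UNIV (\<lambda>_. uniform_count_measure (carrier \<Gamma>)))"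
      by simp
    fix J :: "nat set" and F
    assume J: "finite J" "J \<subseteq> UNIV" and F: "\<And>j. j \<in> J \<Longrightarrow> F j \<in> sets (uniform_count_measure (carrier \<Gamma>))"
    have Fs: "F j \<subseteq> carrier \<Gamma>" if "j \<in> J" for j using F[OF that] by (simp add: sets_uniform_count_measure)
    have cm: "prod_emb UNIV (\<lambda>_::nat. uniform_count_measure (carrier \<Gamma>)) J (Pi\<^sub>E J F) \<in> sets (haar_power \<Gamma>)"
      unfolding haar_eq using J F by (intro sets_PiM_I) auto
    have pre: "sh \<Gamma> z -` prod_emb UNIV (\<lambda>_::nat. uniform_count_measure (carrier \<Gamma>)) J (Pi\<^sub>E J F) \<inter> space (haar_power \<Gamma>)
        = prod_emb UNIV (\<lambda>_::nat. uniform_count_measure (carrier \<Gamma>)) J (Pi\<^sub>E J (\<lambda>j. {b \<in> carrier \<Gamma>. z j \<otimes>\<^bsub>\<Gamma>\<^esub> b \<in> F j}))"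
      unfolding cyl_eq using sh_closed[OF z] by (auto simp: sh_def space_haar)
    have "emeasure (distr (PiM UNIV (\<lambda>_. uniform_count_measure (carrier \<Gamma>))) (PiM UNIV (\<lambda>_. uniform_count_measure (carrier \<Gamma>))) (sh \<Gamma> z)) (prod_emb UNIV (\<lambda>_::nat. uniform_count_measure (carrier \<Gamma>)) J (Pi\<^sub>E J F))
      = emeasure (haar_power \<Gamma>) (sh \<Gamma> z -` prod_emb UNIV (\<lambda>_::nat. uniform_count_measure (carrier \<Gamma>)) J (Pi\<^sub>E J F) \<inter> space (haar_power \<Gamma>))"
      using sh_measurable[OF z] cm unfolding haar_eq by (simp add: emeasure_distr)
    also have "\<dots> = emeasure (haar_power \<Gamma>) (prod_emb UNIV (\<lambda>_::nat. uniform_count_measure (carrier \<Gamma>)) J (Pi\<^sub>E J (\<lambda>j. {b \<in> carrier \<Gamma>. z j \<otimes>\<^bsub>\<Gamma>\<^esub> b \<in> F j})))"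
      by (simp only: pre)
    also have "\<dots> = (\<Prod>j\<in>J. emeasure (uniform_count_measure (carrier \<Gamma>)) {b \<in> carrier \<Gamma>. z j \<otimes>\<^bsub>\<Gamma>\<^esub> b \<in> F j})"
      unfolding haar_eq using J by (intro emeasure_PiM_emb) (auto simp: sets_uniform_count_measure)
    also have "\<dots> = (\<Prod>j\<in>J. emeasure (uniform_count_measure (carrier \<Gamma>)) (F j))"
    proof (rule prod.cong[OF refl])
      fix j assume j: "j \<in> J"
      have zj: "z j \<in> carrier \<Gamma>" using z by (simp add: space_haar)
      show "emeasure (uniform_count_measure (carrier \<Gamma>)) {b \<in> carrier \<Gamma>. z j \<otimes>\<^bsub>\<Gamma>\<^esub> b \<in> F j} = emeasure (uniform_count_measure (carrier \<Gamma>)) (F j)"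
        using fin Fs[OF j] card_trans[OF zj Fs[OF j]] by (simp add: emeasure_uniform_count_measure)
    qed
    finally show "emeasure (distr (PiM UNIV (\<lambda>_. uniform_count_measure (carrier \<Gamma>))) (PiM UNIV (\<lambda>_. uniform_count_measure (carrier \<Gamma>))) (sh \<Gamma> z)) (prod_emb UNIV (\<lambda>_::nat. uniform_count_measure (carrier \<Gamma>)) J (Pi\<^sub>E J F))
       = (\<Prod>j\<in>J. emeasure (uniform_count_measure (carrier \<Gamma>)) (F j))" .
  qed
qed

lemma sh_measure:
  assumes z: "z \<in> space (haar_power \<Gamma>)" and A: "A \<in> sets (haar_power \<Gamma>)"
  shows "measure (haar_power \<Gamma>) (sh \<Gamma> z -` A \<inter> space (haar_power \<Gamma>)) = measure (haar_power \<Gamma>) A"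
proof -
  have "measure (haar_power \<Gamma>) (sh \<Gamma> z -` A \<inter> space (haar_power \<Gamma>)) = measure (distr (haar_power \<Gamma>) (haar_power \<Gamma>) (sh \<Gamma> z)) A"
    using sh_measurable[OF z] A by (simp add: measure_distr)
  then show ?thesis by (simp add: sh_preserving[OF z])
qed

lemma sh_sets:
  assumes z: "z \<in> space (haar_power \<Gamma>)" and A: "A \<in> sets (haar_power \<Gamma>)"
  shows "sh \<Gamma> z -` A \<inter> space (haar_power \<Gamma>) \<in> sets (haar_power \<Gamma>)"
  using sh_measurable[OF z] A by (rule measurable_sets)

end



context hsetup begin

lemma cyl_sets:
  assumes J: "finite J" and F: "\<And>j. j \<in> J \<Longrightarrow> F j \<subseteq> carrier \<Gamma>"
  shows "{x \<in> space (haar_power \<Gamma>). \<forall>j\<in>J. x j \<in> F j} \<in> sets (haar_power \<Gamma>)"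
proof -
  have "prod_emb UNIV (\<lambda>_::nat. uniform_count_measure (carrier \<Gamma>)) J (Pi\<^sub>E J F) \<in> sets (haar_power \<Gamma>)"
    unfolding haar_eq using J F by (intro sets_PiM_I) (auto simp: sets_uniform_count_measure)
  then show ?thesis by (simp only: cyl_eq)
qed

lemma inv_mult_one:
  assumes "a \<in> carrier \<Gamma>" "b \<in> carrier \<Gamma>"
  shows "inv\<^bsub>\<Gamma>\<^esub> a \<otimes>\<^bsub>\<Gamma>\<^esub> b = \<one>\<^bsub>\<Gamma>\<^esub> \<longleftrightarrow> b = a"
proof -
  interpret group \<Gamma> by (rule gr)
  show ?thesis
  proof
    assume "inv\<^bsub>\<Gamma>\<^esub> a \<otimes>\<^bsub>\<Gamma>\<^esub> b = \<one>\<^bsub>\<Gamma>\<^esub>"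
    then have "inv\<^bsub>\<Gamma>\<^esub> b = inv\<^bsub>\<Gamma>\<^esub> a" using assms by (intro inv_equality) auto
    then show "b = a" using assms by (metis inv_inv)
  qed (use assms in simp)
qed

lemma cyl_indep:
  assumes T: "T \<in> sets (haar_power \<Gamma>)"
    and inv: "\<And>w. w \<in> space (haar_power \<Gamma>) \<Longrightarrow> finite {n. w n \<noteq> \<one>\<^bsub>\<Gamma>\<^esub>} \<Longrightarrow> sh \<Gamma> w -` T \<inter> space (haar_power \<Gamma>) = T"
    and J: "finite J" and F: "\<And>j. j \<in> J \<Longrightarrow> F j \<subseteq> carrier \<Gamma>"
  shows "measure (haar_power \<Gamma>) (T \<inter> {x \<in> space (haar_power \<Gamma>). \<forall>j\<in>J. x j \<in> F j})
       = measure (haar_power \<Gamma>) T * (\<Prod>j\<in>J. real (card (F j)) / real (card (carrier \<Gamma>)))"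
proof -
  interpret prob_space "haar_power \<Gamma>" by (rule prob_haar)
  interpret G: group \<Gamma> by (rule gr)
  define Sp where "Sp = space (haar_power \<Gamma>)"
  define P where "P d = {x \<in> Sp. \<forall>j\<in>J. x j = d j}" for d :: "nat \<Rightarrow> 'a"
  define p where "p = measure (haar_power \<Gamma>) (T \<inter> P (\<lambda>_. \<one>\<^bsub>\<Gamma>\<^esub>))"
  define c where "c = card (carrier \<Gamma>)"
  have c0: "c > 0" unfolding c_def using fin G.one_closed card_gt_0_iff by blast
  have Psets: "P d \<in> sets (haar_power \<Gamma>)" if d: "\<And>j. j \<in> J \<Longrightarrow> d j \<in> carrier \<Gamma>" for d
  proof -
    have "P d = {x \<in> space (haar_power \<Gamma>). \<forall>j\<in>J. x j \<in> {d j}}" by (auto simp: P_def Sp_def)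
    then show ?thesis using cyl_sets[OF J, of "\<lambda>j. {d j}"] d by simp
  qed
  have ptE: "measure (haar_power \<Gamma>) (T \<inter> P d) = p" if d: "d \<in> Pi\<^sub>E J (\<lambda>_. carrier \<Gamma>)" for d
  proof -
    define w where "w n = (if n \<in> J then inv\<^bsub>\<Gamma>\<^esub> d n else \<one>\<^bsub>\<Gamma>\<^esub>)" for n
    have dj: "d j \<in> carrier \<Gamma>" if "j \<in> J" for j using d that by auto
    have w: "w \<in> space (haar_power \<Gamma>)" using dj by (auto simp: space_haar w_def)
    have wf: "finite {n. w n \<noteq> \<one>\<^bsub>\<Gamma>\<^esub>}" by (rule finite_subset[OF _ J]) (auto simp: w_def)
    have one_sets: "T \<inter> P (\<lambda>_. \<one>\<^bsub>\<Gamma>\<^esub>) \<in> sets (haar_power \<Gamma>)" using T Psets by auto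
    have "sh \<Gamma> w -` (T \<inter> P (\<lambda>_. \<one>\<^bsub>\<Gamma>\<^esub>)) \<inter> Sp = (sh \<Gamma> w -` T \<inter> Sp) \<inter> (sh \<Gamma> w -` P (\<lambda>_. \<one>\<^bsub>\<Gamma>\<^esub>) \<inter> Sp)"
      by auto
    also have "sh \<Gamma> w -` T \<inter> Sp = T" unfolding Sp_def by (rule inv[OF w wf])
    also have "sh \<Gamma> w -` P (\<lambda>_. \<one>\<^bsub>\<Gamma>\<^esub>) \<inter> Sp = P d"
    proof -
      have "x \<in> sh \<Gamma> w -` P (\<lambda>_. \<one>\<^bsub>\<Gamma>\<^esub>) \<longleftrightarrow> x \<in> P d" if x: "x \<in> Sp" for x
      proof -
        have xs: "sh \<Gamma> w x \<in> Sp" using sh_closed[OF w] x by (simp add: Sp_def)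
        have "x \<in> sh \<Gamma> w -` P (\<lambda>_. \<one>\<^bsub>\<Gamma>\<^esub>) \<longleftrightarrow> (\<forall>j\<in>J. inv\<^bsub>\<Gamma>\<^esub> d j \<otimes>\<^bsub>\<Gamma>\<^esub> x j = \<one>\<^bsub>\<Gamma>\<^esub>)"
          using xs by (simp add: P_def sh_def w_def)
        also have "\<dots> \<longleftrightarrow> (\<forall>j\<in>J. x j = d j)"
          using inv_mult_one dj x by (auto simp: Sp_def space_haar)
        finally show ?thesis using x by (simp add: P_def)
      qed
      then show ?thesis by (auto simp: P_def)
    qed
    finally have "sh \<Gamma> w -` (T \<inter> P (\<lambda>_. \<one>\<^bsub>\<Gamma>\<^esub>)) \<inter> Sp = T \<inter> P d" .
    then show ?thesis using sh_measure[OF w one_sets] by (simp add: p_def Sp_def)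
  qed
  have decomp: "measure (haar_power \<Gamma>) (T \<inter> {x \<in> Sp. \<forall>j\<in>J. x j \<in> G j}) = real (card (Pi\<^sub>E J G)) * p"
    if G: "\<And>j. j \<in> J \<Longrightarrow> G j \<subseteq> carrier \<Gamma>" for G
  proof -
    have fG: "finite (Pi\<^sub>E J G)" using J G fin by (intro finite_PiE) (auto intro: finite_subset)
    have "T \<inter> {x \<in> Sp. \<forall>j\<in>J. x j \<in> G j} = (\<Union>d\<in>Pi\<^sub>E J G. T \<inter> P d)"
    proof
      show "T \<inter> {x \<in> Sp. \<forall>j\<in>J. x j \<in> G j} \<subseteq> (\<Union>d\<in>Pi\<^sub>E J G. T \<inter> P d)"
      proof
        fix x assume x: "x \<in> T \<inter> {x \<in> Sp. \<forall>j\<in>J. x j \<in> G j}"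
        then have "restrict x J \<in> Pi\<^sub>E J G" "x \<in> T \<inter> P (restrict x J)" by (auto simp: P_def)
        then show "x \<in> (\<Union>d\<in>Pi\<^sub>E J G. T \<inter> P d)" by blast
      qed
      show "(\<Union>d\<in>Pi\<^sub>E J G. T \<inter> P d) \<subseteq> T \<inter> {x \<in> Sp. \<forall>j\<in>J. x j \<in> G j}"
        by (auto simp: P_def PiE_iff)
    qed
    moreover have "measure (haar_power \<Gamma>) (\<Union>d\<in>Pi\<^sub>E J G. T \<inter> P d) = (\<Sum>d\<in>Pi\<^sub>E J G. measure (haar_power \<Gamma>) (T \<inter> P d))"
    proof (rule measure_finite_Union[OF fG])
      show "(\<lambda>d. T \<inter> P d) ` Pi\<^sub>E J G \<subseteq> sets (haar_power \<Gamma>)"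
        using T G by (auto simp: PiE_iff intro!: sets.Int Psets)
      show "disjoint_family_on (\<lambda>d. T \<inter> P d) (Pi\<^sub>E J G)"
        unfolding disjoint_family_on_def
      proof (intro ballI impI)
        fix d e assume d: "d \<in> Pi\<^sub>E J G" and e: "e \<in> Pi\<^sub>E J G" and ne: "d \<noteq> e"
        then obtain j where j: "j \<in> J" "d j \<noteq> e j" using PiE_ext by blast
        then show "T \<inter> P d \<inter> (T \<inter> P e) = {}" by (auto simp: P_def)
      qed
    qed (simp add: emeasure_eq_measure)
    moreover have "(\<Sum>d\<in>Pi\<^sub>E J G. measure (haar_power \<Gamma>) (T \<inter> P d)) = (\<Sum>d\<in>Pi\<^sub>E J G. p)"
      using G by (intro sum.cong refl ptE) (auto simp: PiE_iff)
    ultimately show ?thesis by simp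
  qed
  have full: "{x \<in> Sp. \<forall>j\<in>J. x j \<in> carrier \<Gamma>} = Sp" by (auto simp: Sp_def space_haar)
  have mT: "measure (haar_power \<Gamma>) T = real c ^ card J * p"
  proof -
    have "T \<inter> {x \<in> Sp. \<forall>j\<in>J. x j \<in> carrier \<Gamma>} = T"
      using full sets.sets_into_space[OF T] unfolding Sp_def by blast
    then show ?thesis using decomp[of "\<lambda>_. carrier \<Gamma>"] by (simp add: card_PiE[OF J] c_def)
  qed
  have "measure (haar_power \<Gamma>) (T \<inter> {x \<in> Sp. \<forall>j\<in>J. x j \<in> F j}) = (\<Prod>j\<in>J. real (card (F j))) * p"
    using decomp[OF F] by (simp add: card_PiE[OF J])
  also have "\<dots> = measure (haar_power \<Gamma>) T * (\<Prod>j\<in>J. real (card (F j)) / real c)"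
    using c0 by (simp add: mT prod_dividef)
  finally show ?thesis by (simp add: Sp_def c_def)
qed

lemma zero_one:
  assumes T: "T \<in> sets (haar_power \<Gamma>)"
    and inv: "\<And>w. w \<in> space (haar_power \<Gamma>) \<Longrightarrow> finite {n. w n \<noteq> \<one>\<^bsub>\<Gamma>\<^esub>} \<Longrightarrow> sh \<Gamma> w -` T \<inter> space (haar_power \<Gamma>) = T"
  shows "measure (haar_power \<Gamma>) T = 0 \<or> measure (haar_power \<Gamma>) T = 1"
proof -
  interpret prob_space "haar_power \<Gamma>" by (rule prob_haar)
  let ?Ms = "\<lambda>_::nat. uniform_count_measure (carrier \<Gamma>)"
  let ?m = "measure (haar_power \<Gamma>) T"
  have Sinv: "sh \<Gamma> w -` space (haar_power \<Gamma>) \<inter> space (haar_power \<Gamma>) = space (haar_power \<Gamma>)"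
    if "w \<in> space (haar_power \<Gamma>)" for w using sh_closed[OF that] by auto
  have cylm: "measure (haar_power \<Gamma>) {x \<in> space (haar_power \<Gamma>). \<forall>j\<in>J. x j \<in> F j}
       = (\<Prod>j\<in>J. real (card (F j)) / real (card (carrier \<Gamma>)))"
    if J: "finite J" and F: "\<And>j. j \<in> J \<Longrightarrow> F j \<subseteq> carrier \<Gamma>" for J F
    using cyl_indep[OF sets.top Sinv J F] by (simp add: prob_space Int_absorb1)
  have "density (haar_power \<Gamma>) (indicator T) = density (haar_power \<Gamma>) (\<lambda>_. ennreal ?m)"
  proof (rule measure_eqI_PiM_infinite[where I=UNIV and M="?Ms"])
    show "sets (density (haar_power \<Gamma>) (indicator T)) = sets (PiM UNIV ?Ms)" by (simp add: haar_eq)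
    show "sets (density (haar_power \<Gamma>) (\<lambda>_. ennreal ?m)) = sets (PiM UNIV ?Ms)" by (simp add: haar_eq)
    show "finite_measure (density (haar_power \<Gamma>) (indicator T))"
      by (rule finite_measure_restricted[OF T])
    fix A :: "nat \<Rightarrow> 'a set" and J :: "nat set"
    assume J: "finite J" "J \<subseteq> UNIV" and A: "\<And>i. i \<in> J \<Longrightarrow> A i \<in> sets (?Ms i)"
    have As: "A j \<subseteq> carrier \<Gamma>" if "j \<in> J" for j using A[OF that] by (simp add: sets_uniform_count_measure)
    have cs: "prod_emb UNIV ?Ms J (Pi\<^sub>E J A) \<in> sets (haar_power \<Gamma>)"
      unfolding cyl_eq by (rule cyl_sets[OF J(1) As])
    have "emeasure (density (haar_power \<Gamma>) (indicator T)) (prod_emb UNIV ?Ms J (Pi\<^sub>E J A))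
        = emeasure (haar_power \<Gamma>) (T \<inter> prod_emb UNIV ?Ms J (Pi\<^sub>E J A))"
      by (rule emeasure_restricted[OF T cs])
    also have "\<dots> = ennreal (?m * (\<Prod>j\<in>J. real (card (A j)) / real (card (carrier \<Gamma>))))"
      unfolding cyl_eq emeasure_eq_measure using cyl_indep[OF T inv J(1) As] by simp
    also have "\<dots> = ennreal ?m * emeasure (haar_power \<Gamma>) (prod_emb UNIV ?Ms J (Pi\<^sub>E J A))"
      unfolding cyl_eq emeasure_eq_measure using cylm[OF J(1) As]
      by (simp add: ennreal_mult prod_nonneg)
    also have "\<dots> = emeasure (density (haar_power \<Gamma>) (\<lambda>_. ennreal ?m)) (prod_emb UNIV ?Ms J (Pi\<^sub>E J A))"
      by (rule emeasure_density_const[OF cs, symmetric])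
    finally show "emeasure (density (haar_power \<Gamma>) (indicator T)) (prod_emb UNIV ?Ms J (Pi\<^sub>E J A))
        = emeasure (density (haar_power \<Gamma>) (\<lambda>_. ennreal ?m)) (prod_emb UNIV ?Ms J (Pi\<^sub>E J A))" .
  qed
  then have "emeasure (density (haar_power \<Gamma>) (indicator T)) T = emeasure (density (haar_power \<Gamma>) (\<lambda>_. ennreal ?m)) T"
    by simp
  then have "ennreal ?m = ennreal ?m * ennreal ?m"
    by (simp add: emeasure_restricted[OF T T] emeasure_density_const[OF T] emeasure_eq_measure)
  then have "?m = ?m * ?m" by (simp add: ennreal_mult[symmetric])
  then show ?thesis
    by (metis mult_cancel_left1 mult.commute)
qed

end



locale hsetup2 = hsetup +
  fixes U :: "nat set set"
  assumes fu: "free_ultrafilter U"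
begin

definition W where "W = {w \<in> space (haar_power \<Gamma>). finite {n. w n \<noteq> \<one>\<^bsub>\<Gamma>\<^esub>}}"

lemma W_countable: "countable W"
proof -
  define WN where "WN N = {w \<in> space (haar_power \<Gamma>). \<forall>n\<ge>N. w n = \<one>\<^bsub>\<Gamma>\<^esub>}" for N :: nat
  have fin_WN: "finite (WN N)" for N
  proof -
    have inj: "inj_on (\<lambda>w. restrict w {..<N}) (WN N)"
    proof (rule inj_onI)
      fix v w assume v: "v \<in> WN N" and w: "w \<in> WN N" and eq: "restrict v {..<N} = restrict w {..<N}"
      show "v = w"
      proof
        fix n show "v n = w n"
        proof (cases "n < N")
          case True then show ?thesis using fun_cong[OF eq, of n] by simp
        next
          case False then show ?thesis using v w by (simp add: WN_def)
        qed
      qed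
    qed
    have "(\<lambda>w. restrict w {..<N}) ` WN N \<subseteq> Pi\<^sub>E {..<N} (\<lambda>_. carrier \<Gamma>)"
    proof (rule image_subsetI)
      fix w assume "w \<in> WN N"
      then show "restrict w {..<N} \<in> Pi\<^sub>E {..<N} (\<lambda>_. carrier \<Gamma>)"
        by (subst restrict_PiE_iff) (auto simp: WN_def space_haar)
    qed
    moreover have "finite (Pi\<^sub>E {..<N} (\<lambda>_. carrier \<Gamma>))" using fin by (intro finite_PiE) auto
    ultimately have "finite ((\<lambda>w. restrict w {..<N}) ` WN N)" by (rule finite_subset)
    then show ?thesis using inj by (rule finite_imageD)
  qed
  have "W \<subseteq> (\<Union>N. WN N)"
  proof
    fix w assume w: "w \<in> W"
    then obtain N where "\<forall>n\<in>{n. w n \<noteq> \<one>\<^bsub>\<Gamma>\<^esub>}. n < N"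
      unfolding W_def using finite_nat_set_iff_bounded by blast
    then have "w \<in> WN N" using w by (auto simp: WN_def W_def not_le[symmetric])
    then show "w \<in> (\<Union>N. WN N)" by blast
  qed
  moreover have "countable (\<Union>N. WN N)" using fin_WN by (intro countable_UN) (auto intro: countable_finite)
  ultimately show ?thesis by (rule countable_subset)
qed

lemma psi_sh_W:
  assumes w: "w \<in> W" and x: "x \<in> space (haar_power \<Gamma>)"
  shows "ulim \<Gamma> U (sh \<Gamma> w x) = ulim \<Gamma> U x"
proof -
  interpret group \<Gamma> by (rule gr)
  obtain N where N: "\<forall>n\<in>{n. w n \<noteq> \<one>\<^bsub>\<Gamma>\<^esub>}. n < N"
    using w unfolding W_def using finite_nat_set_iff_bounded by blast
  have ws: "w \<in> space (haar_power \<Gamma>)" using w by (simp add: W_def)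
  have s: "sh \<Gamma> w x \<in> space (haar_power \<Gamma>)" by (rule sh_closed[OF ws x])
  show ?thesis
  proof (rule ulim_finsupp[OF fu fin, of _ N])
    show "\<And>n. sh \<Gamma> w x n \<in> carrier \<Gamma>" using s by (simp add: space_haar)
    show "\<And>n. x n \<in> carrier \<Gamma>" using x by (simp add: space_haar)
    fix n assume "N \<le> n"
    then have "w n = \<one>\<^bsub>\<Gamma>\<^esub>" using N by force
    then show "sh \<Gamma> w x n = x n" using x by (simp add: sh_def space_haar)
  qed
qed

lemma psi_sh_const:
  assumes a: "a \<in> carrier \<Gamma>" and x: "x \<in> space (haar_power \<Gamma>)"
  shows "ulim \<Gamma> U (sh \<Gamma> (\<lambda>_. a) x) = a \<otimes>\<^bsub>\<Gamma>\<^esub> ulim \<Gamma> U x"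
proof -
  have "ulim \<Gamma> U (sh \<Gamma> (\<lambda>_. a) x) = ulim \<Gamma> U (\<lambda>_. a) \<otimes>\<^bsub>\<Gamma>\<^esub> ulim \<Gamma> U x"
    unfolding sh_def using a x by (intro ulim_mult[OF fu fin gr]) (auto simp: space_haar)
  then show ?thesis using ulim_const[OF fu fin a] by simp
qed

lemma psi_carrier: "x \<in> space (haar_power \<Gamma>) \<Longrightarrow> ulim \<Gamma> U x \<in> carrier \<Gamma>"
  using ulim_ex[OF fu fin] by (simp add: space_haar)

lemma sh_sh:
  assumes "w \<in> space (haar_power \<Gamma>)" "v \<in> space (haar_power \<Gamma>)" "x \<in> space (haar_power \<Gamma>)"
  shows "sh \<Gamma> w (sh \<Gamma> v x) = sh \<Gamma> (\<lambda>n. w n \<otimes>\<^bsub>\<Gamma>\<^esub> v n) x"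
  using assms gr by (auto simp: sh_def space_haar group.is_monoid monoid.m_assoc)

lemma one_W: "(\<lambda>_. \<one>\<^bsub>\<Gamma>\<^esub>) \<in> W"
  using gr by (simp add: W_def space_haar group.is_monoid monoid.one_closed)

lemma sh_one: "x \<in> space (haar_power \<Gamma>) \<Longrightarrow> sh \<Gamma> (\<lambda>_. \<one>\<^bsub>\<Gamma>\<^esub>) x = x"
  using gr by (simp add: sh_def space_haar group.is_monoid monoid.l_one)

lemma W_mult: "w \<in> W \<Longrightarrow> v \<in> W \<Longrightarrow> (\<lambda>n. w n \<otimes>\<^bsub>\<Gamma>\<^esub> v n) \<in> W"
proof -
  assume w: "w \<in> W" and v: "v \<in> W"
  interpret group \<Gamma> by (rule gr)
  have "{n. w n \<otimes>\<^bsub>\<Gamma>\<^esub> v n \<noteq> \<one>\<^bsub>\<Gamma>\<^esub>} \<subseteq> {n. w n \<noteq> \<one>\<^bsub>\<Gamma>\<^esub>} \<union> {n. v n \<noteq> \<one>\<^bsub>\<Gamma>\<^esub>}" by auto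
  then show ?thesis using w v by (auto simp: W_def space_haar intro: finite_subset)
qed

lemma W_inv: "w \<in> W \<Longrightarrow> (\<lambda>n. inv\<^bsub>\<Gamma>\<^esub> w n) \<in> W"
proof -
  assume w: "w \<in> W"
  interpret group \<Gamma> by (rule gr)
  have "{n. inv\<^bsub>\<Gamma>\<^esub> w n \<noteq> \<one>\<^bsub>\<Gamma>\<^esub>} \<subseteq> {n. w n \<noteq> \<one>\<^bsub>\<Gamma>\<^esub>}" by auto
  then show ?thesis using w by (auto simp: W_def space_haar intro: finite_subset)
qed

lemma null_pre:
  assumes z: "z \<in> space (haar_power \<Gamma>)" and N: "N \<in> null_sets (haar_power \<Gamma>)"
  shows "sh \<Gamma> z -` N \<inter> space (haar_power \<Gamma>) \<in> null_sets (haar_power \<Gamma>)"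
proof -
  have Ns: "N \<in> sets (haar_power \<Gamma>)" using N by auto
  have "emeasure (haar_power \<Gamma>) (sh \<Gamma> z -` N \<inter> space (haar_power \<Gamma>)) = emeasure (distr (haar_power \<Gamma>) (haar_power \<Gamma>) (sh \<Gamma> z)) N"
    using sh_measurable[OF z] Ns by (simp add: emeasure_distr)
  also have "\<dots> = 0" using N by (simp add: sh_preserving[OF z] null_setsD1)
  finally show ?thesis using sh_sets[OF z Ns] by auto
qed

lemma sub_lemma:
  assumes B: "subgroup B \<Gamma>" and c: "c \<in> carrier \<Gamma>" and y: "y \<in> B" and cy: "inv\<^bsub>\<Gamma>\<^esub> c \<otimes>\<^bsub>\<Gamma>\<^esub> y \<in> B"
  shows "c \<in> B"
proof -
  interpret group \<Gamma> by (rule gr)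
  have yc: "y \<in> carrier \<Gamma>" using B y subgroup.subset by blast
  have "inv\<^bsub>\<Gamma>\<^esub> c = (inv\<^bsub>\<Gamma>\<^esub> c \<otimes>\<^bsub>\<Gamma>\<^esub> y) \<otimes>\<^bsub>\<Gamma>\<^esub> inv\<^bsub>\<Gamma>\<^esub> y"
    using c yc by (simp add: m_assoc)
  also have "\<dots> \<in> B" using B cy y by (simp add: subgroup.m_closed subgroup.m_inv_closed)
  finally have "inv\<^bsub>\<Gamma>\<^esub> (inv\<^bsub>\<Gamma>\<^esub> c) \<in> B" using B by (simp add: subgroup.m_inv_closed)
  then show ?thesis using c by simp
qed

lemma nonmeas:
  assumes B: "subgroup B \<Gamma>" and c: "c \<in> carrier \<Gamma>" "c \<notin> B"
  shows "{x \<in> space (haar_power \<Gamma>). ulim \<Gamma> U x \<in> B} \<notin> sets (completion (haar_power \<Gamma>))"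
proof
  interpret prob_space "haar_power \<Gamma>" by (rule prob_haar)
  interpret G: group \<Gamma> by (rule gr)
  define Sp where "Sp = space (haar_power \<Gamma>)"
  define H where "H = {x \<in> Sp. ulim \<Gamma> U x \<in> B}"
  assume "{x \<in> space (haar_power \<Gamma>). ulim \<Gamma> U x \<in> B} \<in> sets (completion (haar_power \<Gamma>))"
  then have "H \<in> sets (completion (haar_power \<Gamma>))" by (simp add: H_def Sp_def)
  then obtain S N N' where HS: "H = S \<union> N" "N \<subseteq> N'" "N' \<in> null_sets (haar_power \<Gamma>)" "S \<in> sets (haar_power \<Gamma>)"
    by (rule sets_completionE)
  have WSp: "w \<in> Sp" if "w \<in> W" for w using that by (simp add: W_def Sp_def)
  define T where "T = (\<Inter>w\<in>W. sh \<Gamma> w -` S \<inter> Sp)"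
  have Ts: "T \<in> sets (haar_power \<Gamma>)"
    unfolding T_def Sp_def using W_countable one_W sh_sets[OF _ HS(4)] WSp[unfolded Sp_def]
    by (intro sets.countable_INT') auto
  have TSp: "T \<subseteq> Sp" unfolding T_def using one_W by blast
  have TH: "T \<subseteq> H"
  proof
    fix x assume x: "x \<in> T"
    then have "sh \<Gamma> (\<lambda>_. \<one>\<^bsub>\<Gamma>\<^esub>) x \<in> S" "x \<in> Sp" unfolding T_def using one_W by blast+
    then show "x \<in> H" using sh_one[of x] HS(1) by (simp add: Sp_def)
  qed
  define Z where "Z = N' \<union> (\<Union>w\<in>W. sh \<Gamma> w -` N' \<inter> Sp)"
  have Zn: "Z \<in> null_sets (haar_power \<Gamma>)"
    unfolding Z_def Sp_def using HS(3) W_countable null_pre WSp[unfolded Sp_def]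
    by (intro null_sets.Un null_sets_UN') auto
  have HTZ: "H \<subseteq> T \<union> Z"
  proof
    fix x assume xH: "x \<in> H"
    then have x: "x \<in> Sp" "ulim \<Gamma> U x \<in> B" by (auto simp: H_def)
    show "x \<in> T \<union> Z"
    proof (cases "x \<in> T")
      case False
      then obtain w where w: "w \<in> W" "sh \<Gamma> w x \<notin> S" using x(1) unfolding T_def by blast
      have "sh \<Gamma> w x \<in> H"
        using sh_closed[OF WSp[OF w(1), unfolded Sp_def]] x psi_sh_W[OF w(1)] by (simp add: H_def Sp_def)
      then have "sh \<Gamma> w x \<in> N'" using HS(1,2) w(2) by blast
      then have "x \<in> sh \<Gamma> w -` N' \<inter> Sp" using x by simp
      then show ?thesis using w(1) unfolding Z_def by blast
    qed simp
  qed
  have Tinv: "sh \<Gamma> w -` T \<inter> space (haar_power \<Gamma>) = T"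
    if w0: "w \<in> space (haar_power \<Gamma>)" "finite {n. w n \<noteq> \<one>\<^bsub>\<Gamma>\<^esub>}" for w
  proof -
    have w: "w \<in> W" using w0 by (simp add: W_def)
    have winv: "(\<lambda>n. inv\<^bsub>\<Gamma>\<^esub> w n) \<in> W" by (rule W_inv[OF w])
    have "x \<in> T \<longleftrightarrow> x \<in> sh \<Gamma> w -` T" if x: "x \<in> Sp" for x
    proof -
      have xs: "sh \<Gamma> w x \<in> Sp" using sh_closed[OF w0(1)] x by (simp add: Sp_def)
      have "x \<in> sh \<Gamma> w -` T \<longleftrightarrow> (\<forall>v\<in>W. sh \<Gamma> (\<lambda>n. v n \<otimes>\<^bsub>\<Gamma>\<^esub> w n) x \<in> S)"
        using xs x WSp w by (auto simp: T_def sh_sh[unfolded Sp_def[symmetric]])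
      also have "\<dots> \<longleftrightarrow> (\<forall>u\<in>W. sh \<Gamma> u x \<in> S)"
      proof
        assume h: "\<forall>v\<in>W. sh \<Gamma> (\<lambda>n. v n \<otimes>\<^bsub>\<Gamma>\<^esub> w n) x \<in> S"
        show "\<forall>u\<in>W. sh \<Gamma> u x \<in> S"
        proof
          fix u assume u: "u \<in> W"
          have "(\<lambda>n. u n \<otimes>\<^bsub>\<Gamma>\<^esub> inv\<^bsub>\<Gamma>\<^esub> w n) \<in> W" by (rule W_mult[OF u winv])
          from bspec[OF h this] have "sh \<Gamma> (\<lambda>n. (u n \<otimes>\<^bsub>\<Gamma>\<^esub> inv\<^bsub>\<Gamma>\<^esub> w n) \<otimes>\<^bsub>\<Gamma>\<^esub> w n) x \<in> S" by simp
          moreover have "(\<lambda>n. (u n \<otimes>\<^bsub>\<Gamma>\<^esub> inv\<^bsub>\<Gamma>\<^esub> w n) \<otimes>\<^bsub>\<Gamma>\<^esub> w n) = u"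
            using WSp[OF u] WSp[OF w] by (auto simp: Sp_def space_haar G.m_assoc)
          ultimately show "sh \<Gamma> u x \<in> S" by simp
        qed
      next
        assume "\<forall>u\<in>W. sh \<Gamma> u x \<in> S"
        then show "\<forall>v\<in>W. sh \<Gamma> (\<lambda>n. v n \<otimes>\<^bsub>\<Gamma>\<^esub> w n) x \<in> S" using W_mult w by blast
      qed
      also have "\<dots> \<longleftrightarrow> x \<in> T" using x by (auto simp: T_def)
      finally show ?thesis by simp
    qed
    then show ?thesis using TSp by (auto simp: Sp_def)
  qed
  have m01: "measure (haar_power \<Gamma>) T = 0 \<or> measure (haar_power \<Gamma>) T = 1"
    by (rule zero_one[OF Ts Tinv])
  define Ta where "Ta a = sh \<Gamma> (\<lambda>_. inv\<^bsub>\<Gamma>\<^esub> a) -` T \<inter> Sp" for a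
  define Za where "Za a = sh \<Gamma> (\<lambda>_. inv\<^bsub>\<Gamma>\<^esub> a) -` Z \<inter> Sp" for a
  have ca: "(\<lambda>_. inv\<^bsub>\<Gamma>\<^esub> a) \<in> space (haar_power \<Gamma>)" if "a \<in> carrier \<Gamma>" for a
    using that by (simp add: space_haar)
  have Ta_sets: "Ta a \<in> sets (haar_power \<Gamma>)" if "a \<in> carrier \<Gamma>" for a
    unfolding Ta_def Sp_def by (rule sh_sets[OF ca[OF that] Ts])
  have Ta_meas: "measure (haar_power \<Gamma>) (Ta a) = measure (haar_power \<Gamma>) T" if "a \<in> carrier \<Gamma>" for a
    unfolding Ta_def Sp_def by (rule sh_measure[OF ca[OF that] Ts])
  have Za_null: "Za a \<in> null_sets (haar_power \<Gamma>)" if "a \<in> carrier \<Gamma>" for a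
    unfolding Za_def Sp_def by (rule null_pre[OF ca[OF that] Zn])
  have Ta_sub: "inv\<^bsub>\<Gamma>\<^esub> a \<otimes>\<^bsub>\<Gamma>\<^esub> ulim \<Gamma> U x \<in> B" if a: "a \<in> carrier \<Gamma>" and x: "x \<in> Ta a" for a x
  proof -
    have "x \<in> Sp" "sh \<Gamma> (\<lambda>_. inv\<^bsub>\<Gamma>\<^esub> a) x \<in> H" using x TH by (auto simp: Ta_def)
    then show ?thesis using psi_sh_const[of "inv\<^bsub>\<Gamma>\<^esub> a" x] a by (simp add: H_def Sp_def)
  qed
  have cover: "x \<in> Ta (ulim \<Gamma> U x) \<union> Za (ulim \<Gamma> U x)" if x: "x \<in> Sp" for x
  proof -
    define a where "a = ulim \<Gamma> U x"
    have a: "a \<in> carrier \<Gamma>" using psi_carrier x by (simp add: a_def Sp_def)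
    have "sh \<Gamma> (\<lambda>_. inv\<^bsub>\<Gamma>\<^esub> a) x \<in> H"
      using sh_closed[OF ca[OF a]] x psi_sh_const[of "inv\<^bsub>\<Gamma>\<^esub> a" x] a subgroup.one_closed[OF B]
      by (simp add: H_def Sp_def a_def)
    then have "sh \<Gamma> (\<lambda>_. inv\<^bsub>\<Gamma>\<^esub> a) x \<in> T \<union> Z" using HTZ by blast
    then show ?thesis using x by (auto simp: Ta_def Za_def a_def)
  qed
  from m01 show False
  proof
    assume m0: "measure (haar_power \<Gamma>) T = 0"
    have un_sets: "(\<lambda>a. Ta a \<union> Za a) ` carrier \<Gamma> \<subseteq> sets (haar_power \<Gamma>)"
      using Ta_sets Za_null by auto
    have "1 = measure (haar_power \<Gamma>) Sp" by (simp add: Sp_def prob_space)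
    also have "\<dots> \<le> measure (haar_power \<Gamma>) (\<Union>a\<in>carrier \<Gamma>. Ta a \<union> Za a)"
    proof (rule finite_measure_mono)
      show "Sp \<subseteq> (\<Union>a\<in>carrier \<Gamma>. Ta a \<union> Za a)" using cover psi_carrier by (fastforce simp: Sp_def)
      show "(\<Union>a\<in>carrier \<Gamma>. Ta a \<union> Za a) \<in> sets (haar_power \<Gamma>)"
        using un_sets fin by (intro sets.finite_UN) auto
    qed
    also have "\<dots> \<le> (\<Sum>a\<in>carrier \<Gamma>. measure (haar_power \<Gamma>) (Ta a \<union> Za a))"
      by (rule finite_measure_subadditive_finite[OF fin un_sets])
    also have "\<dots> = (\<Sum>a\<in>carrier \<Gamma>. 0)"
    proof (rule sum.cong[OF refl])
      fix a assume a: "a \<in> carrier \<Gamma>"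
      show "measure (haar_power \<Gamma>) (Ta a \<union> Za a) = 0"
        using measure_Un_null_set[OF Ta_sets[OF a] Za_null[OF a]] Ta_meas[OF a] m0 by simp
    qed
    finally show False by simp
  next
    assume m1: "measure (haar_power \<Gamma>) T = 1"
    have disj: "Ta c \<inter> T = {}"
    proof (rule ccontr)
      assume "Ta c \<inter> T \<noteq> {}"
      then obtain x where x: "x \<in> Ta c" "x \<in> T" by blast
      have "ulim \<Gamma> U x \<in> B" using x(2) TH by (auto simp: H_def)
      moreover have "inv\<^bsub>\<Gamma>\<^esub> c \<otimes>\<^bsub>\<Gamma>\<^esub> ulim \<Gamma> U x \<in> B" by (rule Ta_sub[OF c(1) x(1)])
      ultimately have "c \<in> B" by (rule sub_lemma[OF B c(1)])
      with c(2) show False by simp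
    qed
    have "measure (haar_power \<Gamma>) (Ta c \<union> T) = measure (haar_power \<Gamma>) (Ta c) + measure (haar_power \<Gamma>) T"
      by (rule finite_measure_Union[OF Ta_sets[OF c(1)] Ts disj])
    also have "\<dots> = 2" using Ta_meas[OF c(1)] m1 by simp
    finally have "measure (haar_power \<Gamma>) (Ta c \<union> T) = 2" .
    moreover have "measure (haar_power \<Gamma>) (Ta c \<union> T) \<le> 1" by (rule prob_le_1)
    ultimately show False by simp
  qed
qed

end

theorem mainTheorem5:
  fixes \<Gamma> :: "('a, 'c) monoid_scheme" and U :: "nat set set" and g :: 'a
  assumes "simple_group \<Gamma>"
    and "finite (carrier \<Gamma>)"
    and "\<not> comm_group \<Gamma>"
    and "free_ultrafilter U"
    and "g \<in> carrier \<Gamma>" and "g \<noteq> \<one>\<^bsub>\<Gamma>\<^esub>"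
  shows "subgroup {x \<in> carrier (power_group \<Gamma>). ulim \<Gamma> U x \<in> generate \<Gamma> {g}} (power_group \<Gamma>)
       \<and> \<not> ({x \<in> carrier (power_group \<Gamma>). ulim \<Gamma> U x \<in> generate \<Gamma> {g}} \<lhd> power_group \<Gamma>)
       \<and> \<not> haar_measurable \<Gamma> {x \<in> carrier (power_group \<Gamma>). ulim \<Gamma> U x \<in> generate \<Gamma> {g}}"
proof -
  interpret sg: simple_group \<Gamma> by (rule assms(1))
  have gr: "group \<Gamma>" by (rule sg.is_group)
  interpret hs: hsetup2 \<Gamma> U
    using gr assms(2,4) by (simp add: hsetup2_def hsetup_def hsetup2_axioms_def)
  define B where "B = generate \<Gamma> {g}"
  have Bsub: "subgroup B \<Gamma>" unfolding B_def using assms(5) by (intro sg.generate_is_subgroup) simp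
  obtain a b where a: "a \<in> carrier \<Gamma>" and b: "b \<in> B" and abB: "a \<otimes>\<^bsub>\<Gamma>\<^esub> b \<otimes>\<^bsub>\<Gamma>\<^esub> inv\<^bsub>\<Gamma>\<^esub> a \<notin> B"
    using cyclic_not_normal[OF assms(1,3,5,6)] unfolding B_def by blast
  have bc: "b \<in> carrier \<Gamma>" using b Bsub subgroup.subset by blast
  have abc: "a \<otimes>\<^bsub>\<Gamma>\<^esub> b \<otimes>\<^bsub>\<Gamma>\<^esub> inv\<^bsub>\<Gamma>\<^esub> a \<in> carrier \<Gamma>" using a bc by simp
  interpret h: group_hom "power_group \<Gamma>" \<Gamma> "ulim \<Gamma> U" by (rule ulim_hom[OF assms(4,2) gr])
  define H where "H = {x \<in> carrier (power_group \<Gamma>). ulim \<Gamma> U x \<in> B}"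
  have P1: "subgroup H (power_group \<Gamma>)" unfolding H_def by (rule subgroup_pre[OF assms(4,2) gr Bsub])
  have P2: "\<not> (H \<lhd> power_group \<Gamma>)"
  proof
    assume nrm: "H \<lhd> power_group \<Gamma>"
    have xc: "(\<lambda>_. a) \<in> carrier (power_group \<Gamma>)" using a by (simp add: carrier_pg)
    have hc: "(\<lambda>_. b) \<in> carrier (power_group \<Gamma>)" using bc by (simp add: carrier_pg)
    have hH: "(\<lambda>_. b) \<in> H" using hc b ulim_const[OF assms(4,2) bc] by (simp add: H_def)
    have "(\<lambda>_. a) \<otimes>\<^bsub>power_group \<Gamma>\<^esub> (\<lambda>_. b) \<otimes>\<^bsub>power_group \<Gamma>\<^esub> inv\<^bsub>power_group \<Gamma>\<^esub> (\<lambda>_. a) \<in> H"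
      by (rule normal.inv_op_closed2[OF nrm xc hH])
    then have "ulim \<Gamma> U ((\<lambda>_. a) \<otimes>\<^bsub>power_group \<Gamma>\<^esub> (\<lambda>_. b) \<otimes>\<^bsub>power_group \<Gamma>\<^esub> inv\<^bsub>power_group \<Gamma>\<^esub> (\<lambda>_. a)) \<in> B"
      by (simp add: H_def)
    moreover have "ulim \<Gamma> U ((\<lambda>_. a) \<otimes>\<^bsub>power_group \<Gamma>\<^esub> (\<lambda>_. b) \<otimes>\<^bsub>power_group \<Gamma>\<^esub> inv\<^bsub>power_group \<Gamma>\<^esub> (\<lambda>_. a))
        = a \<otimes>\<^bsub>\<Gamma>\<^esub> b \<otimes>\<^bsub>\<Gamma>\<^esub> inv\<^bsub>\<Gamma>\<^esub> a"
      using xc hc by (simp add: h.hom_mult h.hom_inv ulim_const[OF assms(4,2) a] ulim_const[OF assms(4,2) bc])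
    ultimately show False using abB by simp
  qed
  have P3: "\<not> haar_measurable \<Gamma> H"
  proof -
    have "H = {x \<in> space (haar_power \<Gamma>). ulim \<Gamma> U x \<in> B}"
      by (simp add: H_def carrier_pg hs.space_haar)
    then show ?thesis unfolding haar_measurable_def using hs.nonmeas[OF Bsub abc abB] by simp
  qed
  show ?thesis using P1 P2 P3 by (simp add: H_def B_def)
qed

end
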